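(* Let $L\ge3$, assume $\min\{d_1,\dots,d_{L-1}\}\ge d_{\min}$, and suppose that for some $i\in[r_Y]$, $$\lambda=y_i^{2(L-1)}\Big(\big(\tfrac{L-2}L\big)^{\frac L{2(L-1)}}+\big(\tfrac L{L-2}\big)^{\frac{L-2}{2(L-1)}}\Big)^{-2(L-1)}.$$ Then there exists $\bm\sigma^*\in\mathcal A$ such that there do not exist constants $\epsilon,\kappa>0$ with $\mathrm{dist}(\bm W,\widehat{\mathcal W}_{\bm\sigma^*})\le\kappa\|\nabla G(\bm W)\|_F$ for all $\bm W$ satisfying $\mathrm{dist}(\bm W,\widehat{\mathcal W}_{\bm\sigma^*})\le\epsilon$.
   Context: Setting: $d_0,\dots,d_L$ positive integers, $d_{\min}=\min\{d_0,d_L\}$, $\lambda>0$, $\bm Y\in\mathbb R^{d_L\times d_0}$ diagonal with entries $y_1\ge\dots\ge y_{d_{\min}}\ge0$, $r_Y$ the number of positive $y_i$; $G(\bm W)=\|\bm W_L\cdots\bm W_1-\sqrt\lambda\bm Y\|_F^2+\lambda\sum_l\|\bm W_l\|_F^2$, $\bm W_l\in\mathbb R^{d_l\times d_{l-1}}$. $\mathcal A=\{\bm a\in\mathbb R^{d_{\min}}:a_i^{2L-1}-\sqrt\lambda y_ia_i^{L-1}+\lambda a_i=0,a_i\ge0\ \forall i\}$. For $\bm\sigma^*\in\mathcal A$, $\widehat{\mathcal W}_{\bm\sigma^*}:=\mathcal W_{\mathrm{sort}(\bm\sigma^* )}$, where $\mathrm{sort}$ arranges entries in nonincreasing order and, for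 nonincreasing $\bm\sigma=\bm\Pi\bm a$ with $\bm a\in\mathcal A$ and $\bm\Pi$ a permutation matrix, $\mathcal W_{\bm\sigma}$ is the set of tuples $\bm W_1=\bm Q_2\bm\Sigma_1\mathrm{BlkD}(\bm\Pi,\bm I)\mathrm{BlkD}(\bm O_1,\dots,\bm O_{p_Y+1})$, $\bm W_l=\bm Q_{l+1}\bm\Sigma_l\bm Q_l^T$ ($2\le l\le L-1$), $\bm W_L=\mathrm{BlkD}(\bm O_1^T,\dots,\bm O_{p_Y}^T,\widehat{\bm O}_{p_Y+1}^T)\mathrm{BlkD}(\bm\Pi^T,\bm I)\bm\Sigma_L\bm Q_L^T$, with $\bm\Sigma_l\in\mathbb R^{d_l\times d_{l-1}}$ having top-left block $\mathrm{diag}(\bm\sigma)$, zeros elsewhere, and $\bm Q_l\in\mathcal O^{d_{l-1}}$, $\bm O_k\in\mathcal O^{h_k}$ ($h_k$ the multiplicities of the $p_Y$ distinct positive $y$-values), $\bm O_{p_Y+1}\in\mathcal O^{d_0-r_Y}$, $\widehat{\bm O}_{p_Y+1}\in\mathcal O^{d_L-r_Y}$ arbitrary orthogonal. Distances and gradient norms are Frobenius norms on tuples. *)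

theory Defs
  imports "Jordan_Normal_Form.Matrix" "HOL-Combinatorics.Permutations" "HOL-Analysis.Derivative"
begin

(* Conventions: layer dimensions d :: nat => nat (d 0, ..., d L);
   tuples W :: nat => real mat with W l (1 <= l <= L) the l-th weight matrix;
   vectors in R^dmin are functions nat => real with indices 0 ..< dmin
   (paper index i corresponds to i-1 here). *)

definition dmin :: "(nat \<Rightarrow> nat) \<Rightarrow> nat \<Rightarrow> nat" where
  "dmin d L = min (d 0) (d L)"

definition Ymat :: "(nat \<Rightarrow> nat) \<Rightarrow> nat \<Rightarrow> (nat \<Rightarrow> real) \<Rightarrow> real mat" where
  "Ymat d L y = Matrix.mat (d L) (d 0) (\<lambda>(i,j). if i = j \<and> i < dmin d L then y i else 0)"

definition rY :: "(nat \<Rightarrow> nat) \<Rightarrow> nat \<Rightarrow> (nat \<Rightarrow> real) \<Rightarrow> nat" where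
  "rY d L y = card {i. i < dmin d L \<and> y i > 0}"

definition yvals :: "(nat \<Rightarrow> nat) \<Rightarrow> nat \<Rightarrow> (nat \<Rightarrow> real) \<Rightarrow> real list" where
  "yvals d L y = rev (sorted_list_of_set {y i | i. i < dmin d L \<and> y i > 0})"

definition pY :: "(nat \<Rightarrow> nat) \<Rightarrow> nat \<Rightarrow> (nat \<Rightarrow> real) \<Rightarrow> nat" where
  "pY d L y = length (yvals d L y)"

definition hmult :: "(nat \<Rightarrow> nat) \<Rightarrow> nat \<Rightarrow> (nat \<Rightarrow> real) \<Rightarrow> nat \<Rightarrow> nat" where
  "hmult d L y k = card {i. i < dmin d L \<and> y i = yvals d L y ! k}"

definition fro2 :: "real mat \<Rightarrow> real" where
  "fro2 A = (\<Sum>i<dim_row A. \<Sum>j<dim_col A. (A $$ (i,j))^2)"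

definition valid_tuple :: "(nat \<Rightarrow> nat) \<Rightarrow> nat \<Rightarrow> (nat \<Rightarrow> real mat) \<Rightarrow> bool" where
  "valid_tuple d L W = (\<forall>l\<in>{1..L}. W l \<in> carrier_mat (d l) (d (l - 1)))"

fun prodW :: "(nat \<Rightarrow> nat) \<Rightarrow> (nat \<Rightarrow> real mat) \<Rightarrow> nat \<Rightarrow> real mat" where
  "prodW d W 0 = 1\<^sub>m (d 0)"
| "prodW d W (Suc k) = W (Suc k) * prodW d W k"

definition Gobj :: "(nat \<Rightarrow> nat) \<Rightarrow> nat \<Rightarrow> real \<Rightarrow> (nat \<Rightarrow> real) \<Rightarrow> (nat \<Rightarrow> real mat) \<Rightarrow> real" where
  "Gobj d L lam y W = fro2 (prodW d W L - sqrt lam \<cdot>\<^sub>m Ymat d L y) + lam * (\<Sum>l\<in>{1..L}. fro2 (W l))"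

definition Emat :: "nat \<Rightarrow> nat \<Rightarrow> nat \<Rightarrow> nat \<Rightarrow> real mat" where
  "Emat n m i j = Matrix.mat n m (\<lambda>(a,b). if a = i \<and> b = j then 1 else 0)"

definition gradnorm :: "(nat \<Rightarrow> nat) \<Rightarrow> nat \<Rightarrow> real \<Rightarrow> (nat \<Rightarrow> real) \<Rightarrow> (nat \<Rightarrow> real mat) \<Rightarrow> real" where
  "gradnorm d L lam y W = sqrt (\<Sum>l\<in>{1..L}. \<Sum>i<d l. \<Sum>j<d (l - 1).
     (deriv (\<lambda>t. Gobj d L lam y (W(l := W l + t \<cdot>\<^sub>m Emat (d l) (d (l - 1)) i j))) 0)^2)"

definition tdist :: "nat \<Rightarrow> (nat \<Rightarrow> real mat) \<Rightarrow> (nat \<Rightarrow> real mat) \<Rightarrow> real" where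
  "tdist L W V = sqrt (\<Sum>l\<in>{1..L}. fro2 (W l - V l))"

definition tsetdist :: "nat \<Rightarrow> (nat \<Rightarrow> real mat) \<Rightarrow> (nat \<Rightarrow> real mat) set \<Rightarrow> real" where
  "tsetdist L W S = Inf (tdist L W ` S)"

definition Aset :: "(nat \<Rightarrow> nat) \<Rightarrow> nat \<Rightarrow> real \<Rightarrow> (nat \<Rightarrow> real) \<Rightarrow> (nat \<Rightarrow> real) set" where
  "Aset d L lam y = {a. (\<forall>i \<ge> dmin d L. a i = 0) \<and>
     (\<forall>i < dmin d L. a i ^ (2*L - 1) - sqrt lam * y i * a i ^ (L - 1) + lam * a i = 0 \<and> a i \<ge> 0)}"

definition orth :: "nat \<Rightarrow> real mat \<Rightarrow> bool" where
  "orth n Q = (Q \<in> carrier_mat n n \<and> Q * transpose_mat Q = 1\<^sub>m n)"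

fun blkdiag :: "real mat list \<Rightarrow> real mat" where
  "blkdiag [] = 0\<^sub>m 0 0"
| "blkdiag (A # As) = (let B = blkdiag As in
     four_block_mat A (0\<^sub>m (dim_row A) (dim_col B)) (0\<^sub>m (dim_row B) (dim_col A)) B)"

definition blk2 :: "real mat \<Rightarrow> real mat \<Rightarrow> real mat" where
  "blk2 A B = blkdiag [A, B]"

definition permmat :: "nat \<Rightarrow> (nat \<Rightarrow> nat) \<Rightarrow> real mat" where
  "permmat n p = Matrix.mat n n (\<lambda>(i,j). if p i = j then 1 else 0)"

definition Sigmat :: "(nat \<Rightarrow> nat) \<Rightarrow> nat \<Rightarrow> (nat \<Rightarrow> real) \<Rightarrow> nat \<Rightarrow> real mat" where
  "Sigmat d L s l = Matrix.mat (d l) (d (l - 1)) (\<lambda>(i,j). if i = j \<and> i < dmin d L then s i else 0)"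

text \<open>The set W_sigma for the nonincreasing sigma = Pi a, where Pi = permmat p.\<close>
definition Wset :: "(nat \<Rightarrow> nat) \<Rightarrow> nat \<Rightarrow> (nat \<Rightarrow> real) \<Rightarrow> (nat \<Rightarrow> real) \<Rightarrow> (nat \<Rightarrow> nat)
    \<Rightarrow> (nat \<Rightarrow> real mat) set" where
  "Wset d L y s p = {V. \<exists>Q Os O1 O1h.
     (\<forall>l\<in>{2..L}. orth (d (l - 1)) (Q l)) \<and>
     length Os = pY d L y \<and> (\<forall>k < pY d L y. orth (hmult d L y k) (Os ! k)) \<and>
     orth (d 0 - rY d L y) O1 \<and> orth (d L - rY d L y) O1h \<and>
     V 1 = Q 2 * Sigmat d L s 1 * blk2 (permmat (dmin d L) p) (1\<^sub>m (d 0 - dmin d L))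
             * blkdiag (Os @ [O1]) \<and>
     (\<forall>l\<in>{2..L-1}. V l = Q (l + 1) * Sigmat d L s l * transpose_mat (Q l)) \<and>
     V L = blkdiag (map transpose_mat Os @ [transpose_mat O1h])
             * blk2 (transpose_mat (permmat (dmin d L) p)) (1\<^sub>m (d L - dmin d L))
             * Sigmat d L s L * transpose_mat (Q L)}"

text \<open>hat W_{sigma*} = W_{sort(sigma*)}: sort(sigma*) = Pi sigma* for a permutation pi
  making it nonincreasing (the resulting set does not depend on the choice of such pi).\<close>
definition What :: "(nat \<Rightarrow> nat) \<Rightarrow> nat \<Rightarrow> (nat \<Rightarrow> real) \<Rightarrow> (nat \<Rightarrow> real) \<Rightarrow> (nat \<Rightarrow> real mat) set" where
  "What d L y a = (\<Union>p \<in> {p. p permutes {..<dmin d L} \<and>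
        (\<forall>i j. i \<le> j \<and> j < dmin d L \<longrightarrow> a (p j) \<le> a (p i))}.
      Wset d L y (\<lambda>i. if i < dmin d L then a (p i) else 0) p)"

end

theory Submission
  imports Defs "Jordan_Normal_Form.Determinant"
begin


lemma fro2_prod: "fro2 A = (\<Sum>x\<in>{..<dim_row A}\<times>{..<dim_col A}. (A $$ x)^2)"
  unfolding fro2_def by (simp add: sum.cartesian_product)

definition tr :: "real mat \<Rightarrow> real" where "tr M = (\<Sum>i<dim_row M. M $$ (i,i))"

lemma tr_comm: assumes "A \<in> carrier_mat n m" "B \<in> carrier_mat m n" shows "tr (A * B) = tr (B * A)"
proof -
  have "tr (A * B) = (\<Sum>i<n. \<Sum>k<m. A $$ (i,k) * B $$ (k,i))"
    using assms unfolding tr_def by (auto simp: scalar_prod_def intro!: sum.cong)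
  also have "\<dots> = (\<Sum>k<m. \<Sum>i<n. B $$ (k,i) * A $$ (i,k))"
    by (subst sum.swap) (simp add: mult.commute)
  also have "\<dots> = tr (B * A)"
    using assms unfolding tr_def by (auto simp: scalar_prod_def intro!: sum.cong)
  finally show ?thesis .
qed

lemma fro2_tr: assumes "A \<in> carrier_mat n m" shows "fro2 A = tr (A * transpose_mat A)"
  using assms unfolding fro2_def tr_def
  by (auto simp: scalar_prod_def power2_eq_square intro!: sum.cong)

lemma orth_TQ: assumes "orth n Q" shows "transpose_mat Q * Q = 1\<^sub>m n"
  using assms unfolding orth_def
  by (meson mat_mult_left_right_inverse transpose_carrier_mat)

lemma fro2_tr': assumes "A \<in> carrier_mat n m" shows "fro2 A = tr (transpose_mat A * A)"
  using fro2_tr[OF assms] tr_comm[of A n m "transpose_mat A"] assms by simp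

lemma fro2_left: assumes Q: "Q \<in> carrier_mat n n" "transpose_mat Q * Q = 1\<^sub>m n" and X: "X \<in> carrier_mat n m"
  shows "fro2 (Q * X) = fro2 X"
proof -
  have QX: "Q * X \<in> carrier_mat n m" using Q X by auto
  have "transpose_mat (Q * X) * (Q * X) = (transpose_mat X * transpose_mat Q) * (Q * X)"
    using Q X by (simp add: transpose_mult[of _ n n])
  also have "\<dots> = transpose_mat X * (transpose_mat Q * (Q * X))"
    using Q X by (intro assoc_mult_mat[of _ m n _ n _ m]) auto
  also have "transpose_mat Q * (Q * X) = (transpose_mat Q * Q) * X"
    using Q X by (intro assoc_mult_mat[of _ n n _ n _ m, symmetric]) auto
  also have "\<dots> = X" using Q X by simp
  finally show ?thesis using fro2_tr'[OF QX] fro2_tr'[OF X] by simp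
qed

lemma fro2_right: assumes R: "R \<in> carrier_mat m m" "transpose_mat R * R = 1\<^sub>m m" and X: "X \<in> carrier_mat n m"
  shows "fro2 (X * transpose_mat R) = fro2 X"
proof -
  have XR: "X * transpose_mat R \<in> carrier_mat n m" using R X by auto
  have "(X * transpose_mat R) * transpose_mat (X * transpose_mat R) = (X * transpose_mat R) * (R * transpose_mat X)"
    using R X by (simp add: transpose_mult[of _ n m])
  also have "\<dots> = X * (transpose_mat R * (R * transpose_mat X))"
    using R X by (intro assoc_mult_mat[of _ n m _ m _ n]) auto
  also have "transpose_mat R * (R * transpose_mat X) = (transpose_mat R * R) * transpose_mat X"
    using R X by (intro assoc_mult_mat[of _ m m _ m _ n, symmetric]) auto
  also have "\<dots> = transpose_mat X" using R X by simp
  finally show ?thesis using fro2_tr[OF XR] fro2_tr[OF X] by simp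
qed

lemma fro2_orth: assumes Q: "orth n Q" and R: "orth m R" and A: "A \<in> carrier_mat n m"
  shows "fro2 (Q * A * transpose_mat R) = fro2 A"
proof -
  have Qc: "Q \<in> carrier_mat n n" and Rc: "R \<in> carrier_mat m m" using Q R by (auto simp: orth_def)
  have "fro2 (Q * A * transpose_mat R) = fro2 (Q * A)"
    using fro2_right[OF Rc orth_TQ[OF R], of "Q * A" n] Qc A by auto
  also have "\<dots> = fro2 A" using fro2_left[OF Qc orth_TQ[OF Q] A] .
  finally show ?thesis .
qed

lemma fro2_tri: assumes "A \<in> carrier_mat n m" "B \<in> carrier_mat n m"
  shows "sqrt (fro2 A) \<le> sqrt (fro2 (A - B)) + sqrt (fro2 B)"
proof -
  let ?I = "{..<n}\<times>{..<m}"
  have "sqrt (fro2 A) = L2_set (\<lambda>x. (A - B) $$ x + B $$ x) ?I"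
    unfolding L2_set_def fro2_prod using assms by (auto intro!: sum.cong arg_cong[where f=sqrt])
  also have "\<dots> \<le> L2_set (\<lambda>x. (A - B) $$ x) ?I + L2_set (\<lambda>x. B $$ x) ?I"
    by (rule L2_set_triangle_ineq)
  also have "\<dots> = sqrt (fro2 (A - B)) + sqrt (fro2 B)"
    unfolding L2_set_def fro2_prod using assms by auto
  finally show ?thesis .
qed


fun Phi :: "(nat \<Rightarrow> nat\<times>nat \<Rightarrow> real) \<Rightarrow> (nat \<Rightarrow> nat) \<Rightarrow> nat \<Rightarrow> nat\<times>nat \<Rightarrow> real" where
  "Phi \<psi> d 0 = (\<lambda>(p,q). if p = q then 1 else 0)"
| "Phi \<psi> d (Suc k) = (\<lambda>(p,q). \<Sum>r<d k. \<psi> (Suc k) (p,r) * Phi \<psi> d k (r,q))"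

lemma prodW_mat: assumes "\<forall>k\<in>{1..K}. U k = Matrix.mat (d k) (d (k-1)) (\<psi> k)"
  shows "prodW d U K = Matrix.mat (d K) (d 0) (Phi \<psi> d K)"
  using assms
proof (induction K)
  case 0
  show ?case by (rule eq_matI) auto
next
  case (Suc K)
  hence IH: "prodW d U K = Matrix.mat (d K) (d 0) (Phi \<psi> d K)" by auto
  have U: "U (Suc K) = Matrix.mat (d (Suc K)) (d K) (\<psi> (Suc K))" using Suc.prems by auto
  show ?case by (rule eq_matI) (auto simp: IH U scalar_prod_def intro!: sum.cong)
qed

lemma sum_if_eq: assumes "j < (n::nat)" shows "(\<Sum>r<n. (if r = j then c else 0) * X r) = c * (X j :: real)"
proof -
  have "(\<Sum>r<n. (if r = j then c else 0) * X r) = (\<Sum>r\<in>{..<n}. if r = j then c * X j else 0)"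
    by (rule sum.cong) auto
  also have "\<dots> = c * X j" by (subst sum.delta) (use assms in auto)
  finally show ?thesis .
qed

definition psi :: "nat \<Rightarrow> nat \<Rightarrow> nat \<Rightarrow> nat \<Rightarrow> real \<Rightarrow> real \<Rightarrow> nat \<Rightarrow> nat\<times>nat \<Rightarrow> real" where
  "psi i l a b s t k = (\<lambda>(p,q). (if p = i \<and> q = i then s else 0) + (if k = l \<and> p = a \<and> q = b then t else 0))"
definition Phi0 :: "nat \<Rightarrow> real \<Rightarrow> nat \<Rightarrow> nat\<times>nat \<Rightarrow> real" where
  "Phi0 i s k = (\<lambda>(p,q). if k = 0 then (if p = q then 1 else 0) else (if p = i \<and> q = i then s^k else 0))"
definition rho :: "nat \<Rightarrow> nat \<Rightarrow> nat \<Rightarrow> nat \<Rightarrow> real \<Rightarrow> nat \<Rightarrow> nat\<times>nat \<Rightarrow> real" where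
  "rho i l a b s k = (\<lambda>(p,q). if k < l then 0 else s^(k-l) * (if k = l then (if p = a then 1 else 0) else (if p = i \<and> a = i then 1 else 0)) * Phi0 i s (l-1) (b,q))"

definition Wb :: "(nat \<Rightarrow> nat) \<Rightarrow> nat \<Rightarrow> nat \<Rightarrow> real \<Rightarrow> nat \<Rightarrow> real mat" where
  "Wb d L i s = (\<lambda>k. Sigmat d L (\<lambda>j. if j = i then s else 0) k)"

context
  fixes d :: "nat \<Rightarrow> nat" and L i l a b :: nat and s t :: real
  assumes iL: "\<forall>k\<le>L. i < d k" and lL: "1 \<le> l" "l \<le> L" and ab: "a < d l" "b < d (l-1)" and imin: "i < dmin d L"
begin

abbreviation "psi' \<equiv> psi i l a b s t"
abbreviation "Phi0' \<equiv> Phi0 i s"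
abbreviation "rho' \<equiv> rho i l a b s"

lemma sum_psi: assumes "i < n" "Suc k = l \<Longrightarrow> b < n"
  shows "(\<Sum>r<n. psi' (Suc k) (p,r) * X r) = (if p = i then s * X i else 0) + (if Suc k = l \<and> p = a then t * X b else 0)"
proof -
  have "(\<Sum>r<n. psi' (Suc k) (p,r) * X r) = (\<Sum>r<n. (if r = i then (if p = i then s else 0) else 0) * X r)
     + (\<Sum>r<n. (if r = b then (if Suc k = l \<and> p = a then t else 0) else 0) * X r)"
    unfolding sum.distrib[symmetric] by (rule sum.cong) (auto simp: psi_def algebra_simps)
  also have "\<dots> = (if p = i then s * X i else 0) + (if Suc k = l \<and> p = a then t * X b else 0)"
    using assms by (cases "Suc k = l") (auto simp: sum_if_eq)
  finally show ?thesis .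
qed

lemma Phi_closed: "k \<le> L \<Longrightarrow> Phi psi' d k (p,q) = Phi0' k (p,q) + t * rho' k (p,q)"
proof (induction k arbitrary: p q)
  case 0
  then show ?case using lL by (simp add: Phi0_def rho_def)
next
  case (Suc k)
  have ik: "i < d k" using iL Suc.prems by auto
  have bk: "Suc k = l \<Longrightarrow> b < d k" using ab by auto
  have "Phi psi' d (Suc k) (p,q) = (\<Sum>r<d k. psi' (Suc k) (p,r) * Phi psi' d k (r,q))" by simp
  also have "\<dots> = (if p = i then s * Phi psi' d k (i,q) else 0) + (if Suc k = l \<and> p = a then t * Phi psi' d k (b,q) else 0)"
    by (rule sum_psi[OF ik bk])
  also have "\<dots> = Phi0' (Suc k) (p,q) + t * rho' (Suc k) (p,q)"
  proof (cases "Suc k < l")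
    case True
    then show ?thesis using Suc.IH[of i q] Suc.prems by (auto simp: Phi0_def rho_def)
  next
    case False
    show ?thesis
    proof (cases "Suc k = l")
      case True
      hence r0: "rho' k (x,y) = 0" for x y by (simp add: rho_def)
      show ?thesis using Suc.IH[of i q] Suc.IH[of b q] Suc.prems True
        unfolding r0 by (auto simp: rho_def Phi0_def split: if_splits)
    next
      case F2: False
      hence kl: "Suc k - l = Suc (k - l)" "\<not> k < l" using False by auto
      show ?thesis using Suc.IH[of i q] Suc.prems False F2 kl
        by (cases "k = l") (auto simp: rho_def Phi0_def algebra_simps)
    qed
  qed
  finally show ?case .
qed

abbreviation "Wu \<equiv> (Wb d L i s)(l := Wb d L i s l + t \<cdot>\<^sub>m Emat (d l) (d (l - 1)) a b)"

lemma upd_mat: "k \<in> {1..L} \<Longrightarrow> Wu k = Matrix.mat (d k) (d (k-1)) (psi' k)"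
  using imin by (cases "k = l") (auto simp: Wb_def Sigmat_def Emat_def psi_def intro!: eq_matI)

lemma Gobj_closed: "Gobj d L lam y Wu =
  (\<Sum>p<d L. \<Sum>q<d 0. (Phi0' L (p,q) + t * rho' L (p,q) - sqrt lam * (if p = q \<and> p < dmin d L then y p else 0))^2)
  + lam * (\<Sum>k\<in>{1..L}. \<Sum>p<d k. \<Sum>q<d (k-1). (psi i l a b s 0 k (p,q) + t * (if k = l \<and> p = a \<and> q = b then 1 else 0))^2)"
proof -
  have P: "prodW d Wu L = Matrix.mat (d L) (d 0) (Phi psi' d L)"
    by (rule prodW_mat) (use upd_mat in auto)
  have F1: "fro2 (prodW d Wu L - sqrt lam \<cdot>\<^sub>m Ymat d L y) =
    (\<Sum>p<d L. \<Sum>q<d 0. (Phi0' L (p,q) + t * rho' L (p,q) - sqrt lam * (if p = q \<and> p < dmin d L then y p else 0))^2)"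
    unfolding P fro2_def by (auto simp: Ymat_def Phi_closed intro!: sum.cong)
  have F2: "fro2 (Wu k) = (\<Sum>p<d k. \<Sum>q<d (k-1). (psi i l a b s 0 k (p,q) + t * (if k = l \<and> p = a \<and> q = b then 1 else 0))^2)"
    if "k \<in> {1..L}" for k
    unfolding upd_mat[OF that] fro2_def by (auto simp: psi_def intro!: sum.cong)
  show ?thesis unfolding Gobj_def F1 using F2 by simp
qed

end

lemma dsq1: "((\<lambda>t. (\<alpha> + t * \<beta> - \<gamma>)^2) has_real_derivative 2 * (\<alpha> - \<gamma>) * \<beta>) (at 0)"
  by (auto intro!: derivative_eq_intros)
lemma dsq2: "((\<lambda>t. (\<alpha> + t * \<beta>)^2) has_real_derivative 2 * \<alpha> * \<beta>) (at 0)"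
  by (auto intro!: derivative_eq_intros)

lemma deriv_val:
  assumes iL: "\<forall>k\<le>L. i < d k" and lL: "1 \<le> l" "l \<le> L" and ab: "a < d l" "b < d (l-1)" and imin: "i < dmin d L"
  shows "deriv (\<lambda>t. Gobj d L lam y ((Wb d L i s)(l := Wb d L i s l + t \<cdot>\<^sub>m Emat (d l) (d (l - 1)) a b))) 0 =
    (\<Sum>p<d L. \<Sum>q<d 0. 2 * (Phi0 i s L (p,q) - sqrt lam * (if p = q \<and> p < dmin d L then y p else 0)) * rho i l a b s L (p,q))
    + lam * (\<Sum>k\<in>{1..L}. \<Sum>p<d k. \<Sum>q<d (k-1). 2 * psi i l a b s 0 k (p,q) * (if k = l \<and> p = a \<and> q = b then 1 else 0))"
proof -
  note GC = Gobj_closed[OF iL lL ab imin]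
  show ?thesis unfolding GC
    by (rule DERIV_imp_deriv, intro DERIV_add DERIV_cmult DERIV_sum dsq1 dsq2)
qed


lemma sum_delta_lt: "(\<Sum>q<(m::nat). if q = q0 then f q else 0) = (if q0 < m then f q0 else (0::real))"
  by (subst sum.delta) auto

lemma sum_pt: assumes "P < (n::nat)" "Q < (m::nat)"
  shows "(\<Sum>p<n. \<Sum>q<m. X p q * (if p = P \<and> q = Q then \<gamma> else 0)) = X P Q * (\<gamma>::real)"
proof -
  have inner: "(\<Sum>q<m. X p q * (if p = P \<and> q = Q then \<gamma> else 0)) = (if p = P then X P Q * \<gamma> else 0)" for p
  proof (cases "p = P")
    case True
    have "(\<Sum>q<m. X p q * (if p = P \<and> q = Q then \<gamma> else 0)) = (\<Sum>q<m. (if q = Q then \<gamma> else 0) * X P q)"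
      using True by (auto intro!: sum.cong simp: mult.commute)
    also have "\<dots> = \<gamma> * X P Q" by (rule sum_if_eq[OF assms(2)])
    finally show ?thesis using True by (simp add: mult.commute)
  qed simp
  have "(\<Sum>p<n. \<Sum>q<m. X p q * (if p = P \<and> q = Q then \<gamma> else 0)) = (\<Sum>p<n. if p = P then X P Q * \<gamma> else 0)"
    using inner by simp
  also have "\<dots> = X P Q * \<gamma>" using assms by (simp add: sum_delta_lt)
  finally show ?thesis .
qed

lemma deriv_simp:
  assumes iL: "\<forall>k\<le>L. i < d k" and lL: "1 \<le> l" "l \<le> L" and ab: "a < d l" "b < d (l-1)" and imin: "i < dmin d L"
    and L2: "2 \<le> L"
  shows "(\<Sum>p<d L. \<Sum>q<d 0. 2 * (Phi0 i s L (p,q) - sqrt lam * (if p = q \<and> p < dmin d L then y p else 0)) * rho i l a b s L (p,q))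
    + lam * (\<Sum>k\<in>{1..L}. \<Sum>p<d k. \<Sum>q<d (k-1). 2 * psi i l a b s 0 k (p,q) * (if k = l \<and> p = a \<and> q = b then 1 else 0))
    = 2 * (if a = i \<and> b = i then s^(L-1) * (s^L - sqrt lam * y i) + lam * s else 0)"
proof -
  define X where "X p q = 2 * (Phi0 i s L (p,q) - sqrt lam * (if p = q \<and> p < dmin d L then y p else 0))" for p q
  have XD: "X p q = (if p = q \<and> p = i then 2 * (s^L - sqrt lam * y i) else if p = q \<and> p < dmin d L then - 2 * sqrt lam * y p else 0)" for p q
    using L2 imin by (auto simp: X_def Phi0_def)
  have P2: "(\<Sum>k\<in>{1..L}. \<Sum>p<d k. \<Sum>q<d (k-1). 2 * psi i l a b s 0 k (p,q) * (if k = l \<and> p = a \<and> q = b then 1 else 0))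
     = 2 * (if a = i \<and> b = i then s else 0)"
  proof -
    have "(\<Sum>k\<in>{1..L}. \<Sum>p<d k. \<Sum>q<d (k-1). 2 * psi i l a b s 0 k (p,q) * (if k = l \<and> p = a \<and> q = b then 1 else 0))
      = (\<Sum>k\<in>{1..L}. if k = l then (\<Sum>p<d l. \<Sum>q<d (l-1). 2 * psi i l a b s 0 l (p,q) * (if p = a \<and> q = b then 1 else 0)) else 0)"
      by (rule sum.cong) auto
    also have "\<dots> = (\<Sum>p<d l. \<Sum>q<d (l-1). 2 * psi i l a b s 0 l (p,q) * (if p = a \<and> q = b then 1 else 0))"
      using lL by (subst sum.delta) auto
    also have "\<dots> = 2 * psi i l a b s 0 l (a,b)"
      using sum_pt[OF ab, of "\<lambda>p q. 2 * psi i l a b s 0 l (p,q)" 1] by simp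
    also have "\<dots> = 2 * (if a = i \<and> b = i then s else 0)" by (simp add: psi_def)
    finally show ?thesis .
  qed
  have R: "rho i l a b s L (p,q) = (if l = 1 then (if p = i \<and> q = b then (if a = i then s^(L-1) else 0) else 0)
      else if l = L then (if p = a \<and> q = i then (if b = i then s^(L-1) else 0) else 0)
      else (if p = i \<and> q = i then (if a = i \<and> b = i then s^(L-1) else 0) else 0))" for p q
  proof -
    have pw: "s^(L-l) * s^(l-1) = s^(L-1)" using lL by (simp add: power_add[symmetric])
    show ?thesis
    proof (cases "l = 1")
      case True thus ?thesis using L2 by (simp add: rho_def Phi0_def)
    next
      case F1: False
      show ?thesis
      proof (cases "l = L")
        case True thus ?thesis using F1 lL by (simp add: rho_def Phi0_def)
      next
        case False
        have "rho i l a b s L (p,q) = s^(L-l) * (if p = i \<and> a = i then 1 else 0) * (if b = i \<and> q = i then s^(l-1) else 0)"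
          using False F1 lL by (simp add: rho_def Phi0_def)
        thus ?thesis using False F1 pw by auto
      qed
    qed
  qed
  have P1: "(\<Sum>p<d L. \<Sum>q<d 0. X p q * rho i l a b s L (p,q)) = 2 * (if a = i \<and> b = i then s^(L-1) * (s^L - sqrt lam * y i) else 0)"
  proof -
    have i0: "i < d 0" and iLL: "i < d L" using iL by auto
    consider "l = 1" | "l \<noteq> 1" "l = L" | "l \<noteq> 1" "l \<noteq> L" by blast
    then show ?thesis
    proof cases
      case 1
      have "(\<Sum>p<d L. \<Sum>q<d 0. X p q * rho i l a b s L (p,q)) = X i b * (if a = i then s^(L-1) else 0)"
        unfolding R using 1 sum_pt[OF iLL, of b "d 0" X] ab by simp
      then show ?thesis by (auto simp: XD)
    next
      case 2
      have aL: "a < d L" using ab 2 by simp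
      have "(\<Sum>p<d L. \<Sum>q<d 0. X p q * rho i l a b s L (p,q)) = X a i * (if b = i then s^(L-1) else 0)"
        unfolding R using 2 sum_pt[OF aL i0, of X] by simp
      then show ?thesis by (auto simp: XD)
    next
      case 3
      have "(\<Sum>p<d L. \<Sum>q<d 0. X p q * rho i l a b s L (p,q)) = X i i * (if a = i \<and> b = i then s^(L-1) else 0)"
        unfolding R using 3 sum_pt[OF iLL i0, of X] by simp
      then show ?thesis by (auto simp: XD)
    qed
  qed
  have "(\<Sum>p<d L. \<Sum>q<d 0. 2 * (Phi0 i s L (p,q) - sqrt lam * (if p = q \<and> p < dmin d L then y p else 0)) * rho i l a b s L (p,q))
     = (\<Sum>p<d L. \<Sum>q<d 0. X p q * rho i l a b s L (p,q))" by (simp add: X_def)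
  then have "(\<Sum>p<d L. \<Sum>q<d 0. 2 * (Phi0 i s L (p,q) - sqrt lam * (if p = q \<and> p < dmin d L then y p else 0)) * rho i l a b s L (p,q))
    + lam * (\<Sum>k\<in>{1..L}. \<Sum>p<d k. \<Sum>q<d (k-1). 2 * psi i l a b s 0 k (p,q) * (if k = l \<and> p = a \<and> q = b then 1 else 0))
    = 2 * (if a = i \<and> b = i then s^(L-1) * (s^L - sqrt lam * y i) else 0) + lam * (2 * (if a = i \<and> b = i then s else 0))"
    unfolding P1 P2 by simp
  moreover have "2 * (if a = i \<and> b = i then s^(L-1) * (s^L - sqrt lam * y i) else 0) + lam * (2 * (if a = i \<and> b = i then s else 0))
     = 2 * (if a = i \<and> b = i then s^(L-1) * (s^L - sqrt lam * y i) + lam * s else 0)"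
  proof (cases "a = i \<and> b = i")
    case True then show ?thesis unfolding if_P[OF True] by (simp add: distrib_left)
  next
    case False then show ?thesis unfolding if_not_P[OF False] by simp
  qed
  ultimately show ?thesis by (rule trans)
qed


lemma gradnorm_Wb:
  assumes iL: "\<forall>k\<le>L. i < d k" and imin: "i < dmin d L" and L2: "2 \<le> L"
  shows "gradnorm d L lam y (Wb d L i s) = 2 * sqrt (real L) * \<bar>s^(L-1) * (s^L - sqrt lam * y i) + lam * s\<bar>"
proof -
  define F where "F = s^(L-1) * (s^L - sqrt lam * y i) + lam * s"
  have D: "deriv (\<lambda>t. Gobj d L lam y ((Wb d L i s)(l := Wb d L i s l + t \<cdot>\<^sub>m Emat (d l) (d (l - 1)) a b))) 0
      = 2 * (if a = i \<and> b = i then F else 0)"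
    if "l \<in> {1..L}" "a < d l" "b < d (l-1)" for l a b
  proof -
    have l1: "1 \<le> l" "l \<le> L" using that(1) by auto
    show ?thesis unfolding F_def
      by (rule trans[OF deriv_val[OF iL l1 that(2,3) imin] deriv_simp[OF iL l1 that(2,3) imin L2]])
  qed
  have inner: "(\<Sum>a<d l. \<Sum>b<d (l-1). (2 * (if a = i \<and> b = i then F else 0))^2) = 4 * F^2"
    if "l \<in> {1..L}" for l
  proof -
    have il: "i < d l" "i < d (l-1)" using iL that by auto
    have "(\<Sum>a<d l. \<Sum>b<d (l-1). (2 * (if a = i \<and> b = i then F else 0))^2)
        = (\<Sum>a<d l. \<Sum>b<d (l-1). (\<lambda>a b. 1) a b * (if a = i \<and> b = i then 4 * F^2 else 0))"
      by (intro sum.cong) (auto simp: power2_eq_square)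
    also have "\<dots> = 4 * F^2" using sum_pt[OF il, of "\<lambda>a b. 1"] by simp
    finally show ?thesis .
  qed
  have "gradnorm d L lam y (Wb d L i s) = sqrt (\<Sum>l\<in>{1..L}. \<Sum>a<d l. \<Sum>b<d (l-1). (2 * (if a = i \<and> b = i then F else 0))^2)"
    unfolding gradnorm_def
    apply (rule arg_cong[where f=sqrt])
    apply (rule sum.cong[OF refl])+
    using D by simp
  also have "\<dots> = sqrt (real L * (4 * F^2))" using inner by simp
  also have "\<dots> = 2 * sqrt (real L) * \<bar>F\<bar>"
  proof -
    have "sqrt (real L * (4 * F^2)) = sqrt (real L) * (sqrt 4 * sqrt (F^2))" by (simp only: real_sqrt_mult)
    also have "\<dots> = sqrt (real L) * (2 * \<bar>F\<bar>)" by simp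
    finally show ?thesis by simp
  qed
  finally show ?thesis unfolding F_def .
qed



lemma blkdiag_ones: "blkdiag (map (\<lambda>n. 1\<^sub>m n) ns) = (1\<^sub>m (sum_list ns) :: real mat)"
proof (induction ns)
  case Nil
  show ?case by (auto intro!: eq_matI)
next
  case (Cons n ns)
  show ?case using Cons by (simp add: Let_def)
qed

lemma blkdiag_single: "blkdiag [B] = B"
  by (auto simp: Let_def intro!: eq_matI)

lemma permmat_carrier[simp]: "permmat n p \<in> carrier_mat n n"
  by (simp add: permmat_def)

lemma permmat_dims[simp]: "dim_row (permmat n p) = n" "dim_col (permmat n p) = n"
  by (simp_all add: permmat_def)

lemma blk2_perm: assumes p: "p permutes {..<m}" and mn: "m \<le> n"
  shows "blk2 (permmat m p) (1\<^sub>m (n - m)) = permmat n p"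
proof -
  have pin: "u < m \<Longrightarrow> p u < m" for u using permutes_in_image[OF p, of u] by simp
  have pout: "\<not> u < m \<Longrightarrow> p u = u" for u using p by (simp add: permutes_not_in[OF p])
  show ?thesis unfolding blk2_def blkdiag_single
    apply (rule eq_matI)
    using mn pin pout by (auto simp: permmat_def Let_def)
qed

lemma transpose_permmat: assumes "\<And>x. p (p x) = x" shows "transpose_mat (permmat n p) = permmat n p"
  using assms by (auto simp: permmat_def intro!: eq_matI)

lemma sum_ind1: assumes "j < (n::nat)" shows "(\<Sum>x<n. (if j = x then 1 else 0) * f x) = (f j :: real)"
proof -
  have "(\<Sum>x<n. (if j = x then 1 else 0) * f x) = (\<Sum>x<n. if x = j then f j else 0)"
    by (rule sum.cong) auto
  also have "\<dots> = f j" by (subst sum.delta) (use assms in auto)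
  finally show ?thesis .
qed

lemma perm_conj: assumes p: "p permutes {..<k}" and inv: "\<And>x. p (p x) = x" and kn: "k \<le> n" "k \<le> m"
  and A: "A \<in> carrier_mat n m"
  shows "permmat n p * A * permmat m p = Matrix.mat n m (\<lambda>(u,v). A $$ (p u, p v))"
proof -
  have pin: "u < N \<Longrightarrow> k \<le> N \<Longrightarrow> p u < N" for u N
    using permutes_in_image[OF p, of u] permutes_not_in[OF p, of u] by (cases "u < k") auto
  have PA: "permmat n p * A = Matrix.mat n m (\<lambda>(u,r). A $$ (p u, r))"
  proof (rule eq_matI)
    fix u r assume ur: "u < dim_row (Matrix.mat n m (\<lambda>(u,r). A $$ (p u, r)))" "r < dim_col (Matrix.mat n m (\<lambda>(u,r). A $$ (p u, r)))"
    hence "p u < n" using pin kn by auto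
    then show "(permmat n p * A) $$ (u, r) = Matrix.mat n m (\<lambda>(u,r). A $$ (p u, r)) $$ (u, r)"
      using ur A by (simp add: permmat_def scalar_prod_def sum_ind1 atLeast0LessThan)
  qed (use A in auto)
  show ?thesis unfolding PA
  proof (rule eq_matI)
    fix u v assume uv: "u < dim_row (Matrix.mat n m (\<lambda>(u,v). A $$ (p u, p v)))" "v < dim_col (Matrix.mat n m (\<lambda>(u,v). A $$ (p u, p v)))"
    hence pv: "p v < m" using pin kn by auto
    have "(\<Sum>r<m. A $$ (p u, r) * (if p r = v then 1 else 0)) = (\<Sum>r<m. (if p v = r then 1 else 0) * A $$ (p u, r))"
      by (rule sum.cong) (use inv in auto)
    also have "\<dots> = A $$ (p u, p v)" by (rule sum_ind1[OF pv])
    finally show "(Matrix.mat n m (\<lambda>(u,r). A $$ (p u, r)) * permmat m p) $$ (u, v) = Matrix.mat n m (\<lambda>(u,v). A $$ (p u, p v)) $$ (u, v)"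
      using uv by (simp add: permmat_def scalar_prod_def atLeast0LessThan)
  qed auto
qed

lemma sum_hmult: "sum_list (map (hmult d L y) [0..<pY d L y]) = rY d L y"
proof -
  define S where "S = {j. j < dmin d L \<and> y j > 0}"
  define Vals where "Vals = {y i | i. i < dmin d L \<and> y i > 0}"
  have VS: "Vals = y ` S" unfolding Vals_def S_def by auto
  have fS: "finite S" unfolding S_def by auto
  hence fV: "finite Vals" using VS by simp
  have yv: "yvals d L y = rev (sorted_list_of_set Vals)" unfolding yvals_def Vals_def ..
  have dist: "distinct (yvals d L y)" and sety: "set (yvals d L y) = Vals" using fV yv by auto
  define g where "g v = card {j. j < dmin d L \<and> y j = v}" for v
  have "map (hmult d L y) [0..<pY d L y] = map g (yvals d L y)"
    unfolding pY_def hmult_def g_def by (rule nth_equalityI) auto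
  hence "sum_list (map (hmult d L y) [0..<pY d L y]) = sum g Vals"
    using dist sety by (simp add: sum_list_distinct_conv_sum_set)
  also have "\<dots> = (\<Sum>v\<in>y ` S. card {x \<in> S. y x = v})"
    unfolding VS by (rule sum.cong) (auto simp: g_def S_def intro!: arg_cong[where f=card])
  also have "\<dots> = card S"
    using sum.image_gen[OF fS, of "\<lambda>_. 1::nat" y] by simp
  finally show ?thesis unfolding rY_def S_def .
qed



lemma rY_le: "rY d L y \<le> dmin d L"
proof -
  have "rY d L y \<le> card {..<dmin d L}" unfolding rY_def by (rule card_mono) auto
  thus ?thesis by simp
qed

lemma V0_in_What:
  assumes imin: "i < dmin d L" and mid: "\<forall>l\<in>{1..L-1}. d l \<ge> dmin d L" and s0: "s0 \<ge> 0" and L2: "L \<ge> 2"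
  shows "Wb d L i s0 \<in> What d L y (\<lambda>j. if j = i then s0 else 0)"
proof -
  define m where "m = dmin d L"
  define a where "a = (\<lambda>j::nat. if j = i then s0 else 0)"
  define p where "p = Transposition.transpose 0 i"
  have dl: "l \<le> L \<Longrightarrow> m \<le> d l" for l
    using mid unfolding m_def dmin_def by (cases "l = 0 \<or> l = L") auto
  have im: "i < m" using imin m_def by simp
  have pp: "p permutes {..<m}" unfolding p_def using im by (intro permutes_swap_id) auto
  have inv: "p (p x) = x" for x unfolding p_def by (simp add: Transposition.transpose_def)
  have pinj: "p u = p v \<longleftrightarrow> u = v" for u v using inv by metis
  have p0: "p u = 0 \<longleftrightarrow> u = i" for u unfolding p_def by (auto simp: Transposition.transpose_def)
  have pin: "p u < N \<longleftrightarrow> u < N" if "m \<le> N" for u N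
    using permutes_in_image[OF pp, of u] permutes_not_in[OF pp, of u] that by (cases "u < m") auto
  have sorted: "\<forall>j k. j \<le> k \<and> k < m \<longrightarrow> a (p k) \<le> a (p j)"
  proof (intro allI impI)
    fix j k assume jk: "j \<le> k \<and> k < m"
    show "a (p k) \<le> a (p j)"
    proof (cases "k = 0")
      case True then show ?thesis using jk by simp
    next
      case False then have "p k \<noteq> i" using inv p0 by metis
      then show ?thesis using s0 unfolding a_def by auto
    qed
  qed
  define sg where "sg = (\<lambda>j. if j < m then a (p j) else 0)"
  have conj: "permmat (d l) p * Sigmat d L sg l * permmat (d (l-1)) p = Wb d L i s0 l" if "l \<in> {1..L}" for l
  proof -
    have m1: "m \<le> d l" "m \<le> d (l-1)" using that dl by auto
    have "permmat (d l) p * Sigmat d L sg l * permmat (d (l-1)) p = Matrix.mat (d l) (d (l-1)) (\<lambda>(u,v). Sigmat d L sg l $$ (p u, p v))"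
      by (rule perm_conj[OF pp inv m1]) (simp add: Sigmat_def)
    also have "\<dots> = Wb d L i s0 l"
    proof (rule eq_matI)
      fix u v assume uv: "u < dim_row (Wb d L i s0 l)" "v < dim_col (Wb d L i s0 l)"
      hence uv': "u < d l" "v < d (l-1)" by (auto simp: Wb_def Sigmat_def)
      hence "p u < d l" "p v < d (l-1)" using pin m1 by auto
      then show "Matrix.mat (d l) (d (l-1)) (\<lambda>(u,v). Sigmat d L sg l $$ (p u, p v)) $$ (u, v) = Wb d L i s0 l $$ (u, v)"
        using uv' pin[of m] pinj inv
        by (auto simp: Sigmat_def Wb_def sg_def a_def m_def[symmetric])
    qed (auto simp: Wb_def Sigmat_def)
    finally show ?thesis .
  qed
  define Os where "Os = map (\<lambda>k. 1\<^sub>m (hmult d L y k) :: real mat) [0..<pY d L y]"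
  have rYm: "rY d L y \<le> m" using rY_le m_def by simp
  have bd0: "blkdiag (Os @ [1\<^sub>m (d 0 - rY d L y)]) = 1\<^sub>m (d 0)"
  proof -
    have "Os @ [1\<^sub>m (d 0 - rY d L y)] = map (\<lambda>n. 1\<^sub>m n) (map (hmult d L y) [0..<pY d L y] @ [d 0 - rY d L y])"
      unfolding Os_def by simp
    hence "blkdiag (Os @ [1\<^sub>m (d 0 - rY d L y)]) = 1\<^sub>m (sum_list (map (hmult d L y) [0..<pY d L y] @ [d 0 - rY d L y]))"
      by (simp only: blkdiag_ones)
    also have "\<dots> = 1\<^sub>m (sum_list (map (hmult d L y) [0..<pY d L y]) + (d 0 - rY d L y))" by simp
    also have "\<dots> = 1\<^sub>m (d 0)" using sum_hmult[of d L y] rYm dl[of 0] by simp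
    finally show ?thesis .
  qed
  have bdL: "blkdiag (map transpose_mat Os @ [transpose_mat (1\<^sub>m (d L - rY d L y))]) = 1\<^sub>m (d L)"
  proof -
    have "map transpose_mat Os @ [transpose_mat (1\<^sub>m (d L - rY d L y))] = map (\<lambda>n. 1\<^sub>m n) (map (hmult d L y) [0..<pY d L y] @ [d L - rY d L y])"
      unfolding Os_def by simp
    hence "blkdiag (map transpose_mat Os @ [transpose_mat (1\<^sub>m (d L - rY d L y))]) = 1\<^sub>m (sum_list (map (hmult d L y) [0..<pY d L y] @ [d L - rY d L y]))"
      by (simp only: blkdiag_ones)
    also have "\<dots> = 1\<^sub>m (sum_list (map (hmult d L y) [0..<pY d L y]) + (d L - rY d L y))" by simp
    also have "\<dots> = 1\<^sub>m (d L)" using sum_hmult[of d L y] rYm dl[of L] by simp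
    finally show ?thesis .
  qed
  have orthP: "orth n (permmat n p)" if "m \<le> n" for n
  proof -
    have "permmat n p * transpose_mat (permmat n p) = 1\<^sub>m n"
    proof (rule eq_matI)
      fix u v assume uv: "u < dim_row (1\<^sub>m n :: real mat)" "v < dim_col (1\<^sub>m n :: real mat)"
      hence pu: "p u < n" using pin that by auto
      have "(\<Sum>r<n. (if p u = r then 1 else 0) * (if p v = r then 1 else (0::real))) = (if p v = p u then 1 else 0)"
        by (rule sum_ind1[OF pu])
      then show "(permmat n p * transpose_mat (permmat n p)) $$ (u, v) = 1\<^sub>m n $$ (u, v)"
        using uv pinj by (simp add: permmat_def scalar_prod_def atLeast0LessThan)
    qed auto
    thus ?thesis unfolding orth_def by simp
  qed
  have ps: "p \<in> {p. p permutes {..<dmin d L} \<and> (\<forall>i j. i \<le> j \<and> j < dmin d L \<longrightarrow> a (p j) \<le> a (p i))}"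
    using pp sorted m_def by auto
  have sg': "(\<lambda>i. if i < dmin d L then a (p i) else 0) = sg" unfolding sg_def m_def ..
  have d0m: "m \<le> d 0" and dLm: "m \<le> d L" using dl by auto
  have B0: "blk2 (permmat (dmin d L) p) (1\<^sub>m (d 0 - dmin d L)) = permmat (d 0) p"
    using blk2_perm[OF pp d0m] m_def by simp
  have BL: "blk2 (transpose_mat (permmat (dmin d L) p)) (1\<^sub>m (d L - dmin d L)) = permmat (d L) p"
    using blk2_perm[OF pp dLm] m_def transpose_permmat[of p, OF inv] by simp
  have "Wb d L i s0 \<in> Wset d L y sg p"
    unfolding Wset_def
  proof (rule CollectI, rule exI[of _ "\<lambda>l. permmat (d (l-1)) p"], rule exI[of _ Os], rule exI[of _ "1\<^sub>m (d 0 - rY d L y)"],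
      rule exI[of _ "1\<^sub>m (d L - rY d L y)"], intro conjI)
    show "\<forall>l\<in>{2..L}. orth (d (l - 1)) (permmat (d (l - 1)) p)" using orthP dl by auto
    show "length Os = pY d L y" unfolding Os_def by simp
    show "\<forall>k<pY d L y. orth (hmult d L y k) (Os ! k)" unfolding Os_def orth_def by auto
    show "orth (d 0 - rY d L y) (1\<^sub>m (d 0 - rY d L y))" unfolding orth_def by auto
    show "orth (d L - rY d L y) (1\<^sub>m (d L - rY d L y))" unfolding orth_def by auto
    have c1: "permmat (d 1) p * Sigmat d L sg 1 * permmat (d 0) p = Wb d L i s0 1" using conj[of 1] L2 by simp
    show "Wb d L i s0 1 = permmat (d (2 - 1)) p * Sigmat d L sg 1 * blk2 (permmat (dmin d L) p) (1\<^sub>m (d 0 - dmin d L)) * blkdiag (Os @ [1\<^sub>m (d 0 - rY d L y)])"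
      unfolding B0 bd0 c1[symmetric] by (simp add: Sigmat_def)
    show "\<forall>l\<in>{2..L - 1}. Wb d L i s0 l = permmat (d (l + 1 - 1)) p * Sigmat d L sg l * transpose_mat (permmat (d (l - 1)) p)"
      using conj transpose_permmat[of p, OF inv] by auto
    have cL: "permmat (d L) p * Sigmat d L sg L * permmat (d (L-1)) p = Wb d L i s0 L" using conj[of L] L2 by simp
    show "Wb d L i s0 L = blkdiag (map transpose_mat Os @ [transpose_mat (1\<^sub>m (d L - rY d L y))]) * blk2 (transpose_mat (permmat (dmin d L) p)) (1\<^sub>m (d L - dmin d L)) * Sigmat d L sg L * transpose_mat (permmat (d (L - 1)) p)"
      unfolding bdL BL cL[symmetric] transpose_permmat[of p, OF inv] using blk2_perm[OF pp dLm] m_def by simp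
  qed
  thus ?thesis unfolding What_def a_def[symmetric] using ps sg' by auto
qed




lemma fro2_nonneg: "fro2 A \<ge> 0" unfolding fro2_def by (auto intro!: sum_nonneg)

lemma fro2_Sigmat: assumes "dmin d L \<le> d l" "dmin d L \<le> d (l-1)"
  shows "fro2 (Sigmat d L \<sigma> l) = (\<Sum>u<dmin d L. (\<sigma> u)^2)"
proof -
  let ?m = "dmin d L"
  have "fro2 (Sigmat d L \<sigma> l) = (\<Sum>u<d l. \<Sum>v<d (l-1). if v = u then (if u < ?m then (\<sigma> u)^2 else 0) else 0)"
    unfolding fro2_def Sigmat_def by (intro sum.cong refl) auto
  also have "\<dots> = (\<Sum>u<d l. if u < ?m then (\<sigma> u)^2 else 0)"
    using assms by (intro sum.cong) (auto simp: sum_delta_lt)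
  also have "\<dots> = (\<Sum>u<?m. (\<sigma> u)^2)"
  proof -
    have "(\<Sum>u<d l. if u < ?m then (\<sigma> u)^2 else 0) = (\<Sum>u\<in>{..<d l} \<inter> {u. u < ?m}. (\<sigma> u)^2)"
      using sum.inter_restrict[of "{..<d l}" "\<lambda>u. (\<sigma> u)^2" "{u. u < ?m}"] by simp
    also have "{..<d l} \<inter> {u. u < ?m} = {..<?m}" using assms by auto
    finally show ?thesis .
  qed
  finally show ?thesis .
qed

lemma sum_ev_sq: assumes "i < (m::nat)" shows "(\<Sum>u<m. ((\<lambda>j. if j = i then c else 0) u)^2) = (c::real)^2"
proof -
  have "(\<Sum>u<m. ((\<lambda>j. if j = i then c else 0) u)^2) = (\<Sum>u<m. if u = i then c^2 else 0)"
    by (rule sum.cong) auto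
  also have "\<dots> = c^2" using assms by (simp add: sum_delta_lt)
  finally show ?thesis .
qed

lemma dmin_le: assumes mid: "\<forall>l\<in>{1..L-1}. d l \<ge> dmin d L" and "l \<le> L" shows "dmin d L \<le> d l"
  using assms unfolding dmin_def by (cases "l = 0 \<or> l = L") auto

lemma dist_upper:
  assumes mid: "\<forall>l\<in>{1..L-1}. d l \<ge> dmin d L" and imin: "i < dmin d L"
  shows "tdist L (Wb d L i s) (Wb d L i s0) = sqrt (real L) * \<bar>s - s0\<bar>"
proof -
  have "fro2 (Wb d L i s l - Wb d L i s0 l) = (s - s0)^2" if "l \<in> {1..L}" for l
  proof -
    have m: "dmin d L \<le> d l" "dmin d L \<le> d (l-1)" using dmin_le[OF mid] that by auto
    have "Wb d L i s l - Wb d L i s0 l = Sigmat d L (\<lambda>j. if j = i then s - s0 else 0) l"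
      by (auto simp: Wb_def Sigmat_def intro!: eq_matI)
    thus ?thesis using fro2_Sigmat[OF m] sum_ev_sq[OF imin] by simp
  qed
  hence "tdist L (Wb d L i s) (Wb d L i s0) = sqrt (real L * (s - s0)^2)"
    unfolding tdist_def by simp
  also have "\<dots> = sqrt (real L) * \<bar>s - s0\<bar>" by (simp add: real_sqrt_mult)
  finally show ?thesis .
qed

lemma dist_lower:
  assumes mid: "\<forall>l\<in>{1..L-1}. d l \<ge> dmin d L" and imin: "i < dmin d L" and L3: "L \<ge> 3"
    and s0: "s0 \<ge> 0" and V: "V \<in> What d L y (\<lambda>j. if j = i then s0 else 0)"
  shows "s - s0 \<le> tdist L (Wb d L i s) V"
proof -
  define a where "a = (\<lambda>j::nat. if j = i then s0 else 0)"
  obtain p where pp: "p permutes {..<dmin d L}"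
    and Vw: "V \<in> Wset d L y (\<lambda>i. if i < dmin d L then a (p i) else 0) p"
    using V unfolding What_def a_def by auto
  define sg where "sg = (\<lambda>i. if i < dmin d L then a (p i) else 0)"
  obtain Q where Q: "\<forall>l\<in>{2..L}. orth (d (l - 1)) (Q l)"
    and V2: "\<forall>l\<in>{2..L-1}. V l = Q (l + 1) * Sigmat d L sg l * transpose_mat (Q l)"
    using Vw unfolding Wset_def sg_def by blast
  have V2': "V 2 = Q 3 * Sigmat d L sg 2 * transpose_mat (Q 2)" using V2 L3 by (auto simp: numeral_3_eq_3)
  have Q3: "orth (d 2) (Q 3)" and Q2: "orth (d 1) (Q 2)" using Q L3 by (auto dest: bspec[of _ _ 3] bspec[of _ _ 2])
  have m: "dmin d L \<le> d 2" "dmin d L \<le> d (2-1)" using dmin_le[OF mid] L3 by auto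
  have Sc: "Sigmat d L sg 2 \<in> carrier_mat (d 2) (d 1)" by (simp add: Sigmat_def)
  have "fro2 (V 2) = fro2 (Sigmat d L sg 2)" unfolding V2' by (rule fro2_orth[OF Q3 Q2 Sc])
  also have "\<dots> = (\<Sum>u<dmin d L. (sg u)^2)" by (rule fro2_Sigmat[OF m])
  also have "\<dots> = (\<Sum>u<dmin d L. (a u)^2)"
    using sum.permute[OF pp, of "\<lambda>u. (a u)^2"] unfolding sg_def by (simp add: comp_def)
  also have "\<dots> = s0^2" unfolding a_def by (rule sum_ev_sq[OF imin])
  finally have fV: "fro2 (V 2) = s0^2" .
  have fW: "fro2 (Wb d L i s 2) = s^2" unfolding Wb_def using fro2_Sigmat[OF m] sum_ev_sq[OF imin] by simp
  have Vc: "V 2 \<in> carrier_mat (d 2) (d 1)" unfolding V2' using Q3 Q2 by (auto simp: orth_def Sigmat_def)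
  have Wc: "Wb d L i s 2 \<in> carrier_mat (d 2) (d 1)" by (simp add: Wb_def Sigmat_def)
  have "sqrt (s^2) \<le> sqrt (fro2 (Wb d L i s 2 - V 2)) + sqrt (s0^2)"
    using fro2_tri[OF Wc Vc] fV fW by simp
  hence "s - s0 \<le> sqrt (fro2 (Wb d L i s 2 - V 2))" using s0 by simp
  also have "\<dots> \<le> tdist L (Wb d L i s) V"
    unfolding tdist_def
    using L3 by (intro real_sqrt_le_mono member_le_sum) (auto simp: fro2_nonneg)
  finally show ?thesis .
qed



lemma crit_point:
  fixes L :: nat and Y lam :: real
  assumes L3: "L \<ge> 3" and Y: "Y > 0"
    and lam: "lam = Y powr (2 * (real L - 1)) *
           ((((real L - 2) / real L) powr (real L / (2 * (real L - 1)))
            + (real L / (real L - 2)) powr ((real L - 2) / (2 * (real L - 1))))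
            powr (- 2 * (real L - 1)))"
  shows "\<exists>s0>0. s0^(2*L-1) - sqrt lam * Y * s0^(L-1) + lam * s0 = 0 \<and>
              real (2*L-1) * s0^(2*L-2) - sqrt lam * Y * real (L-1) * s0^(L-2) + lam = 0"
proof -
  obtain m where Lm: "L = m + 2" using L3 by (intro that[of "L-2"]) simp
  define Lr where "Lr = real L"
  have Lr3: "Lr \<ge> 3" using L3 unfolding Lr_def by simp
  define u where "u = (Lr - 2) / (2 * (Lr - 1))"
  define v where "v = Lr / (2 * (Lr - 1))"
  have u0: "u > 0" and v0: "v > 0" using Lr3 by (auto simp: u_def v_def)
  have uv: "u + v = 1"
  proof -
    have "u + v = ((Lr - 2) + Lr) / (2 * (Lr - 1))" unfolding u_def v_def by (rule add_divide_distrib[symmetric])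
    also have "(Lr - 2) + Lr = 2 * (Lr - 1)" by simp
    finally show ?thesis using Lr3 by simp
  qed
  define k where "k = inverse (2 * (Lr - 1))"
  have k0: "k \<noteq> 0" using Lr3 unfolding k_def by simp
  have uk: "u = (Lr - 2) * k" unfolding u_def k_def by (simp add: divide_inverse)
  have vk: "v = Lr * k" unfolding v_def k_def by (simp add: divide_inverse)
  have e1: "(real L - 2) / real L = u / v"
    unfolding uk vk nonzero_mult_divide_mult_cancel_right[OF k0] Lr_def ..
  have e2: "real L / (real L - 2) = v / u"
    unfolding uk vk nonzero_mult_divide_mult_cancel_right[OF k0] Lr_def ..
  have e3: "real L / (2 * (real L - 1)) = v" unfolding v_def Lr_def ..
  have e4: "(real L - 2) / (2 * (real L - 1)) = u" unfolding u_def Lr_def ..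
  define A where "A = (u/v) powr v"
  define B where "B = (v/u) powr u"
  have A0: "A > 0" and B0: "B > 0" using u0 v0 by (auto simp: A_def B_def)
  define S where "S = A + B"
  have S0: "S > 0" using A0 B0 S_def by simp
  have P0: "u powr u * v powr v > 0" using u0 v0 by simp
  have "A * v * (u powr u * v powr v) = u * v"
  proof -
    have "A * v * (u powr u * v powr v) = u powr (u + v) * v"
      using u0 v0 by (simp add: A_def powr_divide powr_add field_simps)
    thus ?thesis using uv u0 by simp
  qed
  moreover have "B * u * (u powr u * v powr v) = u * v"
  proof -
    have "B * u * (u powr u * v powr v) = v powr (u + v) * u"
      using u0 v0 by (simp add: B_def powr_divide powr_add field_simps)
    thus ?thesis using uv v0 by simp
  qed
  ultimately have AB: "A * v = B * u" using P0 by (metis mult_right_cancel less_irrefl)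
  have AS: "A = S * u"
  proof -
    have "A = A * u + A * v" using uv by (metis mult.right_neutral distrib_left)
    also have "\<dots> = A * u + B * u" using AB by simp
    finally show ?thesis by (simp add: S_def distrib_right)
  qed
  have BS: "B = S * v"
  proof -
    have "B = B * u + B * v" using uv by (metis mult.right_neutral distrib_left)
    also have "\<dots> = A * v + B * v" using AB by simp
    finally show ?thesis by (simp add: S_def distrib_right)
  qed
  define w where "w = Y / S"
  have w0: "w > 0" using Y S0 w_def by simp
  have lamw: "lam = w^(2*L-2)"
  proof -
    have "lam = Y powr (2 * (real L - 1)) * S powr (- (2 * (real L - 1)))"
      unfolding lam e1 e2 e3 e4 S_def A_def B_def by simp
    also have "\<dots> = w powr (2 * (real L - 1))"
    proof -
      have gen: "Y powr e * S powr (- e) = w powr e" for e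
        unfolding w_def powr_minus powr_divide by (simp add: divide_inverse)
      show ?thesis by (rule gen)
    qed
    also have "2 * (real L - 1) = real (2*L-2)" using L3 by simp
    also have "w powr real (2*L-2) = w^(2*L-2)" using w0 by (rule powr_realpow)
    finally show ?thesis .
  qed
  have sq: "sqrt lam = w^(L-1)"
  proof -
    have e: "2*L-2 = (L-1)*2" by simp
    have "w^(2*L-2) = (w^(L-1))^2" unfolding e by (rule power_mult)
    thus ?thesis using lamw w0 by simp
  qed
  define \<gamma> where "\<gamma> = (u/v) powr (1 / (2 * (Lr - 1)))"
  have g0: "\<gamma> > 0" using u0 v0 by (simp add: \<gamma>_def)
  have gL: "\<gamma>^L = S * u"
  proof -
    have "\<gamma>^L = \<gamma> powr real L" using g0 by (simp add: powr_realpow)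
    also have "\<dots> = (u/v) powr v" unfolding \<gamma>_def using u0 v0 Lr3
      by (simp add: powr_powr v_def Lr_def)
    finally show ?thesis using AS A_def by simp
  qed
  define G where "G = \<gamma>^m"
  have gm: "S * v * G = 1"
  proof -
    have "\<gamma>^m = \<gamma> powr real m" using g0 by (simp add: powr_realpow)
    also have "real m = Lr - 2" using Lm Lr_def by simp
    also have "\<gamma> powr (Lr - 2) = (u/v) powr u" unfolding \<gamma>_def using u0 v0 Lr3
      by (simp add: powr_powr u_def)
    finally have "G = (u/v) powr u" unfolding G_def .
    hence "B * G = (v/u) powr u * (u/v) powr u" by (simp add: B_def)
    also have "\<dots> = ((v/u) * (u/v)) powr u" by (rule powr_mult[symmetric])
    also have "(v/u) * (u/v) = 1" using u0 v0 by simp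
    also have "1 powr u = (1::real)" by simp
    finally show ?thesis using BS by simp
  qed
  have g2G: "\<gamma>^2 * G = S * u" using gL Lm unfolding G_def by (simp add: power2_eq_square mult_ac)
  have um: "u * (2 * (real m + 1)) = real m" and vm: "v * (2 * (real m + 1)) = real m + 2"
    using Lm Lr3 unfolding u_def v_def Lr_def by (auto simp: field_simps)
  define s0 where "s0 = w * \<gamma>"
  have s00: "s0 > 0" using w0 g0 s0_def by simp
  have YS: "Y = w * S" using S0 w_def by simp
  define \<omega> where "\<omega> = w^m"
  have pw1: "s0^(2*L-1) = \<omega>*\<omega>*w^3*G*G*\<gamma>^3"
  proof -
    have e: "2*L-1 = m+m+3" using Lm by simp
    show ?thesis unfolding s0_def \<omega>_def G_def e by (simp only: power_add power_mult_distrib; simp add: mult_ac)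
  qed
  have pw2: "s0^(L-1) = \<omega>*w*G*\<gamma>"
  proof -
    have e: "L-1 = m+1" using Lm by simp
    show ?thesis unfolding s0_def \<omega>_def G_def e by (simp only: power_add power_mult_distrib; simp add: mult_ac)
  qed
  have pw3: "s0^(2*L-2) = \<omega>*\<omega>*w^2*G*G*\<gamma>^2"
  proof -
    have e: "2*L-2 = m+m+2" using Lm by simp
    show ?thesis unfolding s0_def \<omega>_def G_def e by (simp only: power_add power_mult_distrib; simp add: mult_ac)
  qed
  have pw4: "s0^(L-2) = \<omega>*G" unfolding s0_def \<omega>_def G_def using Lm by (simp add: power_mult_distrib)
  have pl: "lam = \<omega>*\<omega>*w^2"
  proof -
    have e: "2*L-2 = m+m+2" using Lm by simp
    show ?thesis unfolding lamw \<omega>_def e by (simp only: power_add power_mult_distrib; simp add: mult_ac)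
  qed
  have psq: "sqrt lam = \<omega>*w"
  proof -
    have e: "L-1 = m+1" using Lm by simp
    show ?thesis unfolding sq \<omega>_def e by (simp only: power_add power_mult_distrib; simp add: mult_ac)
  qed
  have r1: "real (2*L-1) = 2 * real m + 3" and r2: "real (L-1) = real m + 1" using Lm by auto
  have k1: "\<gamma>^2 * G * G - S * G + 1 = 0"
  proof -
    have "\<gamma>^2 * G * G - S * G + 1 = S * u * G - S * G + S * v * G" using g2G gm by simp
    also have "\<dots> = S * G * (u + v - 1)" by (simp add: algebra_simps)
    finally show ?thesis using uv by simp
  qed
  have f1: "s0^(2*L-1) - sqrt lam * Y * s0^(L-1) + lam * s0 = 0"
  proof -
    have "s0^(2*L-1) - sqrt lam * Y * s0^(L-1) + lam * s0 = \<omega>*\<omega>*w^3*\<gamma> * (\<gamma>^2 * G * G - S * G + 1)"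
      unfolding psq unfolding pw1 pw2 pl YS unfolding s0_def by (simp add: algebra_simps power2_eq_square power3_eq_cube)
    thus ?thesis using k1 by simp
  qed
  have k2: "(2 * real m + 3) * u - (real m + 1) + v = 0"
  proof -
    have "2 * (real m + 1) * ((2 * real m + 3) * u - (real m + 1) + v)
        = (2 * real m + 3) * (u * (2 * (real m + 1))) - 2 * (real m + 1) * (real m + 1) + v * (2 * (real m + 1))"
      by (simp add: algebra_simps)
    also have "\<dots> = 0" unfolding um vm by (simp add: algebra_simps)
    finally show ?thesis by simp
  qed
  have k3: "(2 * real m + 3) * (\<gamma>^2 * G * G) - (real m + 1) * S * G + 1 = 0"
  proof -
    have "(2 * real m + 3) * (\<gamma>^2 * G * G) - (real m + 1) * S * G + 1
        = (2 * real m + 3) * (S * u * G) - (real m + 1) * S * G + S * v * G" using g2G gm by simp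
    also have "\<dots> = S * G * ((2 * real m + 3) * u - (real m + 1) + v)" by (simp add: algebra_simps)
    finally show ?thesis using k2 by simp
  qed
  have f2: "real (2*L-1) * s0^(2*L-2) - sqrt lam * Y * real (L-1) * s0^(L-2) + lam = 0"
  proof -
    have "real (2*L-1) * s0^(2*L-2) - sqrt lam * Y * real (L-1) * s0^(L-2) + lam
       = \<omega>*\<omega>*w^2 * ((2 * real m + 3) * (\<gamma>^2 * G * G) - (real m + 1) * S * G + 1)"
      unfolding psq unfolding pw3 pw4 pl YS r1 r2 by (simp add: algebra_simps power2_eq_square)
    thus ?thesis using k3 by simp
  qed
  show ?thesis using s00 f1 f2 by (intro exI[of _ s0]) auto
qed


theorem lemmaA3:
  fixes d :: "nat \<Rightarrow> nat" and L :: nat and lam :: real and y :: "nat \<Rightarrow> real" and i :: nat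
  assumes "\<forall>l\<le>L. d l > 0"
    and "lam > 0"
    and "\<forall>k j. k \<le> j \<and> j < dmin d L \<longrightarrow> y j \<le> y k"
    and "\<forall>k < dmin d L. y k \<ge> 0"
    and "L \<ge> 3"
    and "\<forall>l\<in>{1..L-1}. d l \<ge> dmin d L"
    and "i < rY d L y"
    and "lam = y i powr (2 * (real L - 1)) *
           ((((real L - 2) / real L) powr (real L / (2 * (real L - 1)))
            + (real L / (real L - 2)) powr ((real L - 2) / (2 * (real L - 1))))
            powr (- 2 * (real L - 1)))"
  shows "\<exists>a \<in> Aset d L lam y. \<not> (\<exists>\<epsilon>>0. \<exists>\<kappa>>0. \<forall>W. valid_tuple d L W \<and>
            tsetdist L W (What d L y a) \<le> \<epsilon> \<longrightarrow>
            tsetdist L W (What d L y a) \<le> \<kappa> * gradnorm d L lam y W)"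
proof -
  note lamp = assms(2) and L3 = assms(5) and mid = assms(6) and lamdef = assms(8)
  have im: "i < dmin d L" using assms(7) rY_le[of d L y] by simp
  have yi0: "y i \<ge> 0" using assms(4) im by simp
  have yip: "y i > 0"
  proof (rule ccontr)
    assume "\<not> y i > 0"
    hence "y i = 0" using yi0 by simp
    hence "lam = 0" using lamdef by simp
    thus False using lamp by simp
  qed
  obtain s0 where s0p: "s0 > 0"
    and f1: "s0^(2*L-1) - sqrt lam * y i * s0^(L-1) + lam * s0 = 0"
    and f2: "real (2*L-1) * s0^(2*L-2) - sqrt lam * y i * real (L-1) * s0^(L-2) + lam = 0"
    using crit_point[OF L3 yip lamdef] by blast
  define a where "a = (\<lambda>j::nat. if j = i then s0 else 0)"
  have aA: "a \<in> Aset d L lam y"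
    unfolding Aset_def a_def using im f1 s0p L3 by (auto simp: power_0_left)
  have L2: "L \<ge> 2" using L3 by simp
  have iL: "\<forall>k\<le>L. i < d k" using im dmin_le[OF mid] by (meson less_le_trans)
  define f where "f s = s^(2*L-1) - sqrt lam * y i * s^(L-1) + lam * s" for s
  have fF: "f s = s^(L-1) * (s^L - sqrt lam * y i) + lam * s" for s
  proof -
    have "s^(L-1) * s^L = s^(L-1+L)" by (simp only: power_add)
    also have "L-1+L = 2*L-1" using L3 by simp
    finally have "s^(L-1) * s^L = s^(2*L-1)" .
    thus ?thesis unfolding f_def by (simp add: algebra_simps)
  qed
  have Df: "(f has_real_derivative 0) (at s0)"
  proof -
    have e: "2*L-1-1 = 2*L-2" "L-1-1 = L-2" by auto
    have d1: "((\<lambda>s. s^(2*L-1)) has_real_derivative real (2*L-1) * s0^(2*L-2)) (at s0)"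
      using DERIV_pow[of "2*L-1" s0] e by simp
    have d2: "((\<lambda>s. s^(L-1)) has_real_derivative real (L-1) * s0^(L-2)) (at s0)"
      using DERIV_pow[of "L-1" s0] e by simp
    have "(f has_real_derivative (real (2*L-1) * s0^(2*L-2) - sqrt lam * y i * (real (L-1) * s0^(L-2)) + lam * 1)) (at s0)"
      unfolding f_def[abs_def] by (intro DERIV_add DERIV_diff DERIV_cmult d1 d2 DERIV_ident)
    moreover have "real (2*L-1) * s0^(2*L-2) - sqrt lam * y i * (real (L-1) * s0^(L-2)) + lam * 1 = 0"
      using f2 by (simp add: mult.assoc)
    ultimately show ?thesis by simp
  qed
  have fs0: "f s0 = 0" using f1 unfolding f_def .
  have lim: "((\<lambda>h. f (s0 + h) / h) \<longlongrightarrow> 0) (at_right 0)"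
  proof -
    have "((\<lambda>h. (f (s0 + h) - f s0) / h) \<longlongrightarrow> 0) (at 0)" using DERIV_D[OF Df] .
    hence "((\<lambda>h. f (s0 + h) / h) \<longlongrightarrow> 0) (at 0)" using fs0 by simp
    thus ?thesis by (rule tendsto_mono[OF at_le[OF subset_UNIV]])
  qed
  show ?thesis
  proof (rule bexI[OF _ aA], rule notI)
    assume "\<exists>\<epsilon>>0. \<exists>\<kappa>>0. \<forall>W. valid_tuple d L W \<and> tsetdist L W (What d L y a) \<le> \<epsilon> \<longrightarrow>
            tsetdist L W (What d L y a) \<le> \<kappa> * gradnorm d L lam y W"
    then obtain \<epsilon> \<kappa> where ep: "\<epsilon> > 0" and kp: "\<kappa> > 0"
      and P: "\<forall>W. valid_tuple d L W \<and> tsetdist L W (What d L y a) \<le> \<epsilon> \<longrightarrow>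
            tsetdist L W (What d L y a) \<le> \<kappa> * gradnorm d L lam y W" by blast
    define c0 where "c0 = 1 / (2 * sqrt (real L) * \<kappa>)"
    have sL: "sqrt (real L) > 0" using L3 by simp
    have c0p: "c0 > 0" unfolding c0_def using sL kp by simp
    have "\<forall>\<^sub>F h in at_right 0. dist (f (s0 + h) / h) 0 < c0"
      using lim c0p by (rule tendstoD)
    then obtain b where bp: "b > 0" and bP: "\<And>h. h > 0 \<Longrightarrow> h < b \<Longrightarrow> \<bar>f (s0 + h) / h\<bar> < c0"
      unfolding eventually_at_right_field by auto
    define h where "h = min b (\<epsilon> / sqrt (real L)) / 2"
    have hp: "h > 0" unfolding h_def using bp ep sL by simp
    have hb: "h < b" unfolding h_def using bp ep sL by simp
    have he: "sqrt (real L) * h \<le> \<epsilon>"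
    proof -
      have gen: "\<And>x y::real. x \<le> y \<Longrightarrow> 0 < x \<Longrightarrow> x / 2 \<le> y" by simp
      have m1: "min b (\<epsilon> / sqrt (real L)) \<le> \<epsilon> / sqrt (real L)" by (rule min.cobounded2)
      have m2: "min b (\<epsilon> / sqrt (real L)) > 0" using bp ep sL by simp
      have "h \<le> \<epsilon> / sqrt (real L)" unfolding h_def using gen[OF m1 m2] .
      thus ?thesis using sL by (simp add: field_simps)
    qed
    define W where "W = Wb d L i (s0 + h)"
    have V0: "Wb d L i s0 \<in> What d L y a" unfolding a_def
      by (rule V0_in_What[OF im mid less_imp_le[OF s0p] L2])
    have bdd: "bdd_below (tdist L W ` What d L y a)"
      by (rule bdd_belowI[of _ 0]) (auto simp: tdist_def fro2_nonneg intro!: sum_nonneg)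
    have up: "tsetdist L W (What d L y a) \<le> sqrt (real L) * h"
    proof -
      have "tsetdist L W (What d L y a) \<le> tdist L W (Wb d L i s0)"
        unfolding tsetdist_def by (rule cInf_lower[OF imageI[OF V0] bdd])
      also have "\<dots> = sqrt (real L) * h" unfolding W_def dist_upper[OF mid im] using hp by simp
      finally show ?thesis .
    qed
    have low: "h \<le> tsetdist L W (What d L y a)"
      unfolding tsetdist_def
    proof (rule cInf_greatest)
      show "tdist L W ` What d L y a \<noteq> {}" using V0 by auto
      fix x assume "x \<in> tdist L W ` What d L y a"
      then obtain V where V: "V \<in> What d L y a" and x: "x = tdist L W V" by auto
      have "(s0 + h) - s0 \<le> tdist L (Wb d L i (s0 + h)) V"
        using dist_lower[OF mid im L3 less_imp_le[OF s0p], of V y "s0 + h"] V unfolding a_def by simp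
      thus "h \<le> x" unfolding x W_def by simp
    qed
    have valid: "valid_tuple d L W" unfolding valid_tuple_def W_def Wb_def by (simp add: Sigmat_def)
    have "tsetdist L W (What d L y a) \<le> \<kappa> * gradnorm d L lam y W"
    proof -
      have "tsetdist L W (What d L y a) \<le> \<epsilon>" using up he by linarith
      thus ?thesis by (rule P[rule_format, OF conjI[OF valid]])
    qed
    also have "gradnorm d L lam y W = 2 * sqrt (real L) * \<bar>f (s0 + h)\<bar>"
      unfolding W_def gradnorm_Wb[OF iL im L2] fF ..
    finally have A1: "h \<le> \<kappa> * (2 * sqrt (real L) * \<bar>f (s0 + h)\<bar>)" using low by simp
    have q1: "\<bar>f (s0 + h) / h\<bar> < c0" by (rule bP[OF hp hb])
    have "\<bar>f (s0 + h)\<bar> / h < c0" using q1 hp by (simp add: abs_divide)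
    hence q2: "\<bar>f (s0 + h)\<bar> < c0 * h" using pos_divide_less_eq[OF hp] by simp
    have q3a: "2 * sqrt (real L) * \<bar>f (s0 + h)\<bar> < 2 * sqrt (real L) * (c0 * h)"
      by (rule mult_strict_left_mono[OF q2]) (use sL in simp)
    have q3: "\<kappa> * (2 * sqrt (real L) * \<bar>f (s0 + h)\<bar>) < \<kappa> * (2 * sqrt (real L) * (c0 * h))"
      by (rule mult_strict_left_mono[OF q3a kp])
    have q4a: "\<kappa> * (2 * sqrt (real L)) * c0 = 1" unfolding c0_def using kp sL by simp
    have q4: "\<kappa> * (2 * sqrt (real L) * (c0 * h)) = h"
    proof -
      have "\<kappa> * (2 * sqrt (real L) * (c0 * h)) = (\<kappa> * (2 * sqrt (real L)) * c0) * h" by (simp only: mult.assoc)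
      thus ?thesis using q4a by simp
    qed
    show False using A1 q3 q4 by linarith
  qed
qed

end
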